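(* Let $G$ be a weakly-reversible chemical reaction network in $s$ species and let $(\mathcal{E}_G)\subseteq\mathbf{k}[x_1,\dots,x_s]$ ($\mathbf{k}$ a field of characteristic zero) be the ideal generated by its associated event-system. Then $G$ is catalytic if and only if $(\mathcal{E}_G)\subsetneq(\mathcal{E}_G):(x_1x_2\cdots x_s)^\infty$.
   Context: A chemical reaction network (CRN) consists of positive integers $s,n$, a finite directed graph $G$ with vertex set $\{1,\dots,n\}$ and edge set $E(G)$, and an injective labeling of vertex $i$ by a monic monomial $\psi_i=\prod_{j=1}^s x_j^{y_{ij}}$, $y_{ij}\in\mathbb{Z}_{\ge0}$. $G$ is weakly-reversible iff each connected component is strongly connected. The associated event-system $\mathcal{E}_G$ is the set of binomials $\psi_i-\psi_j$, one for each pair $\{i,j\}$ with $(i,j)\in E(G)$ or $(j,i)\in E(G)$. The event-graph $\overline{G}$ has as vertices all monic monomials in $x_1,\dots,x_s$, with an edge $(N\psi_i,N\psi_j)$ for each $(i,j)\in E(G)$ and each monic monomial $N$. A weakly-reversible CRN $G$ is catalytic iff there exist monic monomials $M,N$ that are path-connected in $\overline{G}$ such that $M/\gcd(M,N)$ and $N/\gcd(M,N)$ are not path-connected in $\overline{G}$. For an ideal $I$ and polynomial $f$, the saturation is $I:f^\infty=\{g : f^kg\in I \text{ for some } k>0\}$. *)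

theory Defs
  imports Main "HOL-Library.Poly_Mapping"
begin

(* Species x_1..x_s are indexed 0..<s; vertices 1..n are indexed 0..<n.
   A monic monomial prod_j x_j^(m j) is its exponent vector m :: nat \<Rightarrow>\<^sub>0 nat
   with Poly_Mapping.keys m \<subseteq> {..<s}; products of monomials are sums of exponent vectors. *)

definition monomials :: "nat \<Rightarrow> (nat \<Rightarrow>\<^sub>0 nat) set" where
  "monomials s = {m. Poly_Mapping.keys m \<subseteq> {..<s}}"

lift_definition mono_gcd :: "(nat \<Rightarrow>\<^sub>0 nat) \<Rightarrow> (nat \<Rightarrow>\<^sub>0 nat) \<Rightarrow> (nat \<Rightarrow>\<^sub>0 nat)"
  is "\<lambda>f g k. min (f k) (g k)"
proof -
  fix f g :: "nat \<Rightarrow> nat"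
  assume "finite {k. f k \<noteq> 0}"
  moreover have "{k. min (f k) (g k) \<noteq> 0} \<subseteq> {k. f k \<noteq> 0}" by auto
  ultimately show "finite {k. min (f k) (g k) \<noteq> 0}" by (rule finite_subset[rotated])
qed

(* monomial division M / D for D dividing M: exponentwise subtraction *)
definition mono_div :: "(nat \<Rightarrow>\<^sub>0 nat) \<Rightarrow> (nat \<Rightarrow>\<^sub>0 nat) \<Rightarrow> (nat \<Rightarrow>\<^sub>0 nat)" where
  "mono_div M D = M - D"

definition is_crn :: "nat \<Rightarrow> nat \<Rightarrow> (nat \<times> nat) set \<Rightarrow> (nat \<Rightarrow> (nat \<Rightarrow>\<^sub>0 nat)) \<Rightarrow> bool" where
  "is_crn s n E psi \<longleftrightarrow> 0 < s \<and> 0 < n \<and> E \<subseteq> {..<n} \<times> {..<n}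
     \<and> (\<forall>i<n. psi i \<in> monomials s) \<and> inj_on psi {..<n}"

definition weakly_reversible :: "nat \<Rightarrow> (nat \<times> nat) set \<Rightarrow> bool" where
  "weakly_reversible n E \<longleftrightarrow>
     (\<forall>i<n. \<forall>j<n. (i, j) \<in> (E \<union> E\<inverse>)\<^sup>* \<longrightarrow> (i, j) \<in> E\<^sup>* \<and> (j, i) \<in> E\<^sup>*)"

definition event_edges :: "nat \<Rightarrow> (nat \<times> nat) set \<Rightarrow> (nat \<Rightarrow> (nat \<Rightarrow>\<^sub>0 nat))
    \<Rightarrow> ((nat \<Rightarrow>\<^sub>0 nat) \<times> (nat \<Rightarrow>\<^sub>0 nat)) set" where
  "event_edges s E psi = {(N + psi i, N + psi j) | N i j. N \<in> monomials s \<and> (i, j) \<in> E}"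

definition event_connected :: "nat \<Rightarrow> (nat \<times> nat) set \<Rightarrow> (nat \<Rightarrow> (nat \<Rightarrow>\<^sub>0 nat))
    \<Rightarrow> (nat \<Rightarrow>\<^sub>0 nat) \<Rightarrow> (nat \<Rightarrow>\<^sub>0 nat) \<Rightarrow> bool" where
  "event_connected s E psi M N \<longleftrightarrow>
     (M, N) \<in> (event_edges s E psi \<union> (event_edges s E psi)\<inverse>)\<^sup>*"

definition catalytic :: "nat \<Rightarrow> (nat \<times> nat) set \<Rightarrow> (nat \<Rightarrow> (nat \<Rightarrow>\<^sub>0 nat)) \<Rightarrow> bool" where
  "catalytic s E psi \<longleftrightarrow>
     (\<exists>M \<in> monomials s. \<exists>N \<in> monomials s. event_connected s E psi M N \<and>
        \<not> event_connected s E psi (mono_div M (mono_gcd M N)) (mono_div N (mono_gcd M N)))"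

(* Polynomials in k[x_1..x_s]: finitely supported maps from exponent vectors to coefficients,
   with multiplication by convolution (library instance). *)
definition polys :: "nat \<Rightarrow> ((nat \<Rightarrow>\<^sub>0 nat) \<Rightarrow>\<^sub>0 'k::comm_ring_1) set" where
  "polys s = {p. Poly_Mapping.keys p \<subseteq> monomials s}"

definition monom_poly :: "(nat \<Rightarrow>\<^sub>0 nat) \<Rightarrow> ((nat \<Rightarrow>\<^sub>0 nat) \<Rightarrow>\<^sub>0 'k::comm_ring_1)" where
  "monom_poly m = Poly_Mapping.single m 1"

definition event_system :: "(nat \<times> nat) set \<Rightarrow> (nat \<Rightarrow> (nat \<Rightarrow>\<^sub>0 nat))
    \<Rightarrow> ((nat \<Rightarrow>\<^sub>0 nat) \<Rightarrow>\<^sub>0 'k::comm_ring_1) set" where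
  "event_system E psi = {monom_poly (psi i) - monom_poly (psi j) | i j. (i, j) \<in> E}"

definition ideal_gen :: "nat \<Rightarrow> ((nat \<Rightarrow>\<^sub>0 nat) \<Rightarrow>\<^sub>0 'k::comm_ring_1) set
    \<Rightarrow> ((nat \<Rightarrow>\<^sub>0 nat) \<Rightarrow>\<^sub>0 'k) set" where
  "ideal_gen s F = {(\<Sum>g\<in>S. c g * g) | S c. finite S \<and> S \<subseteq> F \<and> (\<forall>g\<in>S. c g \<in> polys s)}"

definition saturation :: "nat \<Rightarrow> ((nat \<Rightarrow>\<^sub>0 nat) \<Rightarrow>\<^sub>0 'k::comm_ring_1) set
    \<Rightarrow> ((nat \<Rightarrow>\<^sub>0 nat) \<Rightarrow>\<^sub>0 'k) \<Rightarrow> ((nat \<Rightarrow>\<^sub>0 nat) \<Rightarrow>\<^sub>0 'k) set" where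
  "saturation s I f = {g \<in> polys s. \<exists>k>0. f ^ k * g \<in> I}"

definition all_vars_monomial :: "nat \<Rightarrow> (nat \<Rightarrow>\<^sub>0 nat)" where
  "all_vars_monomial s = (\<Sum>j<s. Poly_Mapping.single j 1)"

end

theory Submission
  imports Defs
begin

abbreviation lkp where "lkp \<equiv> Poly_Mapping.lookup"
abbreviation kys where "kys \<equiv> Poly_Mapping.keys"
abbreviation sgl where "sgl \<equiv> Poly_Mapping.single"

lemma mono_iff: "m \<in> monomials s \<longleftrightarrow> (\<forall>j. s \<le> j \<longrightarrow> lkp m j = 0)"
  unfolding monomials_def by (auto simp: in_keys_iff subset_iff) (metis leI neq0_conv)

lemma mono_add: "a \<in> monomials s \<Longrightarrow> b \<in> monomials s \<Longrightarrow> a + b \<in> monomials s"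
  by (simp add: mono_iff lookup_add)

lemma mono_minus: "a \<in> monomials s \<Longrightarrow> a - b \<in> monomials s"
  by (simp add: mono_iff lookup_minus)

lemma lookup_gcd: "lkp (mono_gcd f g) k = min (lkp f k) (lkp g k)"
  by transfer simp

lemma mono_gcd_mem: "a \<in> monomials s \<Longrightarrow> mono_gcd a b \<in> monomials s"
  by (simp add: mono_iff lookup_gcd)

lemma mono_add_left: "a + b \<in> monomials s \<Longrightarrow> b \<in> monomials s"
  by (simp add: mono_iff lookup_add)

lemma mono_zero: "0 \<in> monomials s"
  by (simp add: monomials_def)

lemma shift_lookup: "lkp (sgl (W::nat \<Rightarrow>\<^sub>0 nat) (1::'k::comm_ring_1) * g) (W + t) = lkp g t"
proof -
  have "(\<lambda>q. lkp g q when W + t = W + q) = (\<lambda>q. lkp g q when t = q)"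
    by (rule ext) (auto simp: when_def)
  then show ?thesis by (simp add: lookup_mult lookup_single when_mult mult_when)
qed

lemma keys_shift: "kys (sgl (W::nat \<Rightarrow>\<^sub>0 nat) (1::'k::comm_ring_1) * g) \<subseteq> (+) W ` kys g"
  using keys_mult[of "sgl W (1::'k)" g] by auto

type_synonym mono = "nat \<Rightarrow>\<^sub>0 nat"

abbreviation conn where "conn s E psi \<equiv> event_connected s E psi"

lemma conn_refl: "conn s E psi a a"
  by (simp add: event_connected_def)

lemma conn_sym: "conn s E psi a b \<Longrightarrow> conn s E psi b a"
  unfolding event_connected_def
  by (metis converse_Un converse_converse rtrancl_converseI sup_commute)

lemma conn_trans: "conn s E psi a b \<Longrightarrow> conn s E psi b c \<Longrightarrow> conn s E psi a c"
  unfolding event_connected_def by (rule rtrancl_trans)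

lemma edge_shift:
  assumes "T \<in> monomials s" "(y, z) \<in> event_edges s E psi"
  shows "(T + y, T + z) \<in> event_edges s E psi"
proof -
  from assms(2) obtain N i j where "y = N + psi i" "z = N + psi j" "N \<in> monomials s" "(i, j) \<in> E"
    unfolding event_edges_def by blast
  then show ?thesis unfolding event_edges_def
    by (intro CollectI exI[of _ "T + N"] exI[of _ i] exI[of _ j])
       (simp add: add.assoc mono_add assms(1))
qed

lemma conn_shift:
  assumes "T \<in> monomials s" "conn s E psi a b"
  shows "conn s E psi (T + a) (T + b)"
  using assms(2) unfolding event_connected_def
proof (induction rule: rtrancl_induct)
  case base then show ?case by simp
next
  case (step y z)
  then have "(T + y, T + z) \<in> event_edges s E psi \<union> (event_edges s E psi)\<inverse>"
    using edge_shift[OF assms(1)] by auto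
  with step.IH show ?case by (rule rtrancl_into_rtrancl)
qed

lemma conn_edge: "(i, j) \<in> E \<Longrightarrow> conn s E psi (psi i) (psi j)"
proof -
  assume e: "(i, j) \<in> E"
  have "(psi i, psi j) = (0 + psi i, 0 + psi j)" by simp
  then have "(psi i, psi j) \<in> event_edges s E psi"
    unfolding event_edges_def using e mono_zero by blast
  then show ?thesis unfolding event_connected_def by blast
qed

lemma edge_mono:
  assumes "is_crn s n E psi" "(y, z) \<in> event_edges s E psi"
  shows "y \<in> monomials s \<and> z \<in> monomials s"
proof -
  from assms(2) obtain N i j where "y = N + psi i" "z = N + psi j" "N \<in> monomials s" "(i, j) \<in> E"
    unfolding event_edges_def by blast
  moreover have "i < n" "j < n" using assms(1) \<open>(i,j) \<in> E\<close> unfolding is_crn_def by auto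
  ultimately show ?thesis using assms(1) unfolding is_crn_def by (auto intro: mono_add)
qed

lemma conn_mono:
  assumes "is_crn s n E psi" "conn s E psi a b" "a \<in> monomials s"
  shows "b \<in> monomials s"
  using assms(2) unfolding event_connected_def
proof (induction rule: rtrancl_induct)
  case base then show ?case using assms(3) by simp
next
  case (step y z)
  then show ?case using edge_mono[OF assms(1)] by auto
qed

lemma polys_iff: "p \<in> polys s \<longleftrightarrow> kys p \<subseteq> monomials s"
  by (simp add: polys_def)

lemma polys_add: "p \<in> polys s \<Longrightarrow> q \<in> polys s \<Longrightarrow> p + q \<in> polys s"
  using keys_add[of p q] by (auto simp: polys_iff)

lemma polys_uminus: "p \<in> polys s \<Longrightarrow> - (p :: mono \<Rightarrow>\<^sub>0 'k::comm_ring_1) \<in> polys s"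
  by (simp add: polys_iff)

lemma polys_diff: "p \<in> polys s \<Longrightarrow> q \<in> polys s \<Longrightarrow> (p :: mono \<Rightarrow>\<^sub>0 'k::comm_ring_1) - q \<in> polys s"
  using polys_add[of p s "-q"] polys_uminus[of q s] by simp

lemma polys_mult: "p \<in> polys s \<Longrightarrow> q \<in> polys s \<Longrightarrow> (p :: mono \<Rightarrow>\<^sub>0 'k::comm_ring_1) * q \<in> polys s"
  using keys_mult[of p q] by (auto simp: polys_iff intro!: mono_add)

lemma polys_single: "m \<in> monomials s \<Longrightarrow> sgl m c \<in> polys s"
  by (simp add: polys_iff)

lemma polys_sum: "(\<And>g. g \<in> S \<Longrightarrow> F g \<in> polys s) \<Longrightarrow> sum F S \<in> polys s"
  using keys_sum[of F S] unfolding polys_iff by blast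

definition cs :: "mono set \<Rightarrow> (mono \<Rightarrow>\<^sub>0 'k::comm_ring_1) \<Rightarrow> 'k" where
  "cs C f = (\<Sum>u\<in>kys f \<inter> C. lkp f u)"

lemma cs_eq:
  assumes "finite K" "kys f \<subseteq> K"
  shows "cs C f = (\<Sum>u\<in>K \<inter> C. lkp f u)"
  unfolding cs_def
  by (rule sum.mono_neutral_left) (use assms in \<open>auto simp: in_keys_iff\<close>)

lemma cs_add: "cs C (f + g) = cs C f + cs C g"
proof -
  let ?K = "kys f \<union> kys g"
  have "finite ?K" by simp
  moreover have "kys (f + g) \<subseteq> ?K" by (rule keys_add)
  ultimately show ?thesis
    using cs_eq[of ?K f C] cs_eq[of ?K g C] cs_eq[of ?K "f+g" C]
    by (simp add: lookup_add sum.distrib)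
qed

lemma cs_uminus: "cs C (- f) = - cs C (f :: mono \<Rightarrow>\<^sub>0 'k::comm_ring_1)"
  by (simp add: cs_def sum_negf)

lemma cs_diff: "cs C (f - g) = cs C f - cs C (g :: mono \<Rightarrow>\<^sub>0 'k::comm_ring_1)"
  using cs_add[of C f "-g"] cs_uminus[of C g] by simp

lemma cs_zero: "cs C 0 = 0"
  by (simp add: cs_def)

lemma cs_sum: "finite S \<Longrightarrow> cs C (sum F S) = (\<Sum>g\<in>S. cs C (F g))"
  by (induction rule: finite_induct) (simp_all add: cs_zero cs_add)

lemma cs_single: "cs C (sgl m c) = (if m \<in> C then c else 0)"
  using cs_eq[of "{m}" "sgl m c" C] by (simp add: lookup_single)

lemma cs_cong: "kys f \<inter> C = kys f \<inter> D \<Longrightarrow> cs C f = cs D f"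
  by (simp add: cs_def)

lemma cs_shift: "cs C (sgl (W::mono) (1::'k::comm_ring_1) * g) = cs {t. W + t \<in> C} g"
proof -
  have "cs C (sgl W (1::'k) * g) = (\<Sum>u\<in>((+) W ` kys g) \<inter> C. lkp (sgl W (1::'k) * g) u)"
    by (rule cs_eq) (simp_all add: keys_shift)
  also have "((+) W ` kys g) \<inter> C = (+) W ` (kys g \<inter> {t. W + t \<in> C})" by auto
  also have "(\<Sum>u\<in>(+) W ` (kys g \<inter> {t. W + t \<in> C}). lkp (sgl W (1::'k) * g) u)
      = (\<Sum>t\<in>kys g \<inter> {t. W + t \<in> C}. lkp (sgl W (1::'k) * g) (W + t))"
    by (rule sum.reindex_cong[where l="(+) W"]) (auto simp: inj_on_def)
  also have "\<dots> = cs {t. W + t \<in> C} g" by (simp add: shift_lookup cs_def)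
  finally show ?thesis .
qed

definition closedset :: "nat \<Rightarrow> (nat \<times> nat) set \<Rightarrow> (nat \<Rightarrow> mono) \<Rightarrow> mono set \<Rightarrow> bool" where
  "closedset s E psi C \<longleftrightarrow> (\<forall>a b. conn s E psi a b \<longrightarrow> (a \<in> C \<longleftrightarrow> b \<in> C))"

lemma closed_class: "closedset s E psi {v. conn s E psi m v}"
  unfolding closedset_def
proof (intro allI impI)
  fix a b assume ab: "conn s E psi a b"
  have "conn s E psi m a \<Longrightarrow> conn s E psi m b" by (erule conn_trans, rule ab)
  moreover have "conn s E psi m b \<Longrightarrow> conn s E psi m a" by (erule conn_trans, rule conn_sym[OF ab])
  ultimately show "a \<in> {v. conn s E psi m v} \<longleftrightarrow> b \<in> {v. conn s E psi m v}" by blast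
qed

lemma cs_binom_mult:
  assumes "conn s E psi a b" "p \<in> polys s" "closedset s E psi C"
  shows "cs C (p * (sgl a (1::'k::comm_ring_1) - sgl b 1)) = 0"
proof -
  have "p * (sgl a (1::'k) - sgl b 1) = sgl a 1 * p - sgl b 1 * p" by (simp add: algebra_simps)
  then have "cs C (p * (sgl a (1::'k) - sgl b 1)) = cs {t. a + t \<in> C} p - cs {t. b + t \<in> C} p"
    by (simp add: cs_diff cs_shift)
  also have "cs {t. a + t \<in> C} p = cs {t. b + t \<in> C} p"
  proof (rule cs_cong)
    have "a + t \<in> C \<longleftrightarrow> b + t \<in> C" if "t \<in> kys p" for t
    proof -
      have "t \<in> monomials s" using that assms(2) by (auto simp: polys_iff)
      then have "conn s E psi (t + a) (t + b)" using conn_shift assms(1) by blast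
      then show ?thesis using assms(3) unfolding closedset_def by (simp add: add.commute)
    qed
    then show "kys p \<inter> {t. a + t \<in> C} = kys p \<inter> {t. b + t \<in> C}" by auto
  qed
  finally show ?thesis by simp
qed

abbreviation IdG where "IdG s E psi \<equiv> ideal_gen s (event_system E psi)"

definition CharS :: "nat \<Rightarrow> (nat \<times> nat) set \<Rightarrow> (nat \<Rightarrow> mono) \<Rightarrow> (mono \<Rightarrow>\<^sub>0 'k::comm_ring_1) set" where
  "CharS s E psi = {f \<in> polys s. \<forall>C. closedset s E psi C \<longrightarrow> cs C f = 0}"

lemma gen_polys:
  assumes "is_crn s n E psi" "g \<in> event_system E psi"
  shows "g \<in> polys s"
proof -
  from assms(2) obtain i j where "g = monom_poly (psi i) - monom_poly (psi j)" "(i, j) \<in> E"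
    unfolding event_system_def by blast
  moreover have "i < n" "j < n" using assms(1) \<open>(i,j) \<in> E\<close> unfolding is_crn_def by auto
  ultimately show ?thesis using assms(1) unfolding is_crn_def monom_poly_def
    by (auto intro!: polys_diff polys_single)
qed

lemma I_sub_Char:
  assumes "is_crn s n E psi" "f \<in> IdG s E psi"
  shows "f \<in> (CharS s E psi :: (mono \<Rightarrow>\<^sub>0 'k::comm_ring_1) set)"
proof -
  from assms(2) obtain S c where f: "f = (\<Sum>g\<in>S. c g * g)" "finite S" "S \<subseteq> event_system E psi"
      "\<forall>g\<in>S. c g \<in> polys s"
    unfolding ideal_gen_def by blast
  have "f \<in> polys s" unfolding f(1)
    by (rule polys_sum) (use f gen_polys[OF assms(1)] in \<open>auto intro: polys_mult\<close>)
  moreover have "cs C f = 0" if C: "closedset s E psi C" for C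
  proof -
    have "cs C (c g * g) = 0" if g: "g \<in> S" for g
    proof -
      from g f(3) obtain i j where "g = monom_poly (psi i) - monom_poly (psi j)" "(i, j) \<in> E"
        unfolding event_system_def by blast
      then show ?thesis unfolding monom_poly_def
        using cs_binom_mult[OF conn_edge _ C] g f(4) by auto
    qed
    then show ?thesis unfolding f(1) using f(2) by (simp add: cs_sum)
  qed
  ultimately show ?thesis unfolding CharS_def by blast
qed

lemma I_zero: "0 \<in> IdG s E psi"
  unfolding ideal_gen_def by (rule CollectI, rule exI[of _ "{}"]) simp

lemma I_add:
  assumes "f \<in> IdG s E psi" "h \<in> IdG s E psi"
  shows "f + h \<in> (IdG s E psi :: (mono \<Rightarrow>\<^sub>0 'k::comm_ring_1) set)"
proof -
  from assms(1) obtain S c where f: "f = (\<Sum>g\<in>S. c g * g)" "finite S" "S \<subseteq> event_system E psi"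
      "\<forall>g\<in>S. c g \<in> polys s"
    unfolding ideal_gen_def by blast
  from assms(2) obtain T d where h: "h = (\<Sum>g\<in>T. d g * g)" "finite T" "T \<subseteq> event_system E psi"
      "\<forall>g\<in>T. d g \<in> polys s"
    unfolding ideal_gen_def by blast
  define e where "e g = (if g \<in> S then c g else 0) + (if g \<in> T then d g else 0)" for g
  have "(\<Sum>g\<in>S \<union> T. e g * g) = (\<Sum>g\<in>S \<union> T. (if g \<in> S then c g * g else 0))
        + (\<Sum>g\<in>S \<union> T. (if g \<in> T then d g * g else 0))"
    by (subst sum.distrib[symmetric]) (rule sum.cong; simp add: e_def distrib_right)
  also have "\<dots> = f + h"
    unfolding f(1) h(1) using f(2) h(2)
    by (simp add: sum.If_cases Int_absorb1 Int_absorb2)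
  finally have eq: "f + h = (\<Sum>g\<in>S \<union> T. e g * g)" by simp
  have "\<forall>g\<in>S \<union> T. e g \<in> polys s"
    using f(4) h(4) unfolding e_def by (auto intro!: polys_add simp: polys_iff[symmetric])
  then show ?thesis unfolding eq ideal_gen_def using f(2,3) h(2,3) by blast
qed

lemma I_mult:
  assumes "p \<in> polys s" "f \<in> IdG s E psi"
  shows "p * f \<in> (IdG s E psi :: (mono \<Rightarrow>\<^sub>0 'k::comm_ring_1) set)"
proof -
  from assms(2) obtain S c where f: "f = (\<Sum>g\<in>S. c g * g)" "finite S" "S \<subseteq> event_system E psi"
      "\<forall>g\<in>S. c g \<in> polys s"
    unfolding ideal_gen_def by blast
  have "p * f = (\<Sum>g\<in>S. (p * c g) * g)" unfolding f(1) by (simp add: sum_distrib_left mult.assoc)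
  moreover have "\<forall>g\<in>S. p * c g \<in> polys s" using f(4) assms(1) by (auto intro: polys_mult)
  ultimately show ?thesis unfolding ideal_gen_def using f(2,3)
    by (intro CollectI exI[of _ S] exI[of _ "\<lambda>g. p * c g"]) simp
qed

lemma I_gen:
  assumes "g \<in> event_system E psi"
  shows "g \<in> (IdG s E psi :: (mono \<Rightarrow>\<^sub>0 'k::comm_ring_1) set)"
proof -
  have "(1 :: mono \<Rightarrow>\<^sub>0 'k) \<in> polys s" by (simp add: polys_iff mono_zero)
  then show ?thesis unfolding ideal_gen_def using assms
    by (intro CollectI exI[of _ "{g}"] exI[of _ "\<lambda>_. 1"]) simp
qed

lemma I_binom:
  assumes "conn s E psi a b"
  shows "sgl a 1 - sgl b 1 \<in> (IdG s E psi :: (mono \<Rightarrow>\<^sub>0 'k::comm_ring_1) set)"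
  using assms unfolding event_connected_def
proof (induction rule: rtrancl_induct)
  case base then show ?case by (simp add: I_zero)
next
  case (step y z)
  have edge: "sgl y 1 - sgl z 1 \<in> (IdG s E psi :: (mono \<Rightarrow>\<^sub>0 'k) set)"
    if "(y, z) \<in> event_edges s E psi" for y z
  proof -
    from that obtain N i j where "y = N + psi i" "z = N + psi j" "N \<in> monomials s" "(i, j) \<in> E"
      unfolding event_edges_def by blast
    moreover have "monom_poly (psi i) - monom_poly (psi j) \<in> event_system E psi"
      unfolding event_system_def using \<open>(i, j) \<in> E\<close> by blast
    ultimately have "sgl N 1 * (monom_poly (psi i) - monom_poly (psi j)) \<in> (IdG s E psi :: (mono \<Rightarrow>\<^sub>0 'k) set)"
      by (intro I_mult I_gen polys_single)
    then show ?thesis using \<open>y = _\<close> \<open>z = _\<close>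
      by (simp add: monom_poly_def right_diff_distrib mult_single)
  qed
  have yz: "sgl y 1 - sgl z 1 \<in> (IdG s E psi :: (mono \<Rightarrow>\<^sub>0 'k) set)"
  proof (cases "(y, z) \<in> event_edges s E psi")
    case True then show ?thesis by (rule edge)
  next
    case False
    then have "(z, y) \<in> event_edges s E psi" using step.hyps(2) by auto
    then have "sgl 0 (-1) * (sgl z 1 - sgl y 1) \<in> (IdG s E psi :: (mono \<Rightarrow>\<^sub>0 'k) set)"
      by (intro I_mult edge polys_single mono_zero)
    then show ?thesis by (simp add: right_diff_distrib mult_single single_uminus)
  qed
  have "sgl a 1 - sgl z 1 = (sgl a 1 - sgl y 1) + (sgl y (1::'k) - sgl z 1)" by simp
  then show ?case using I_add[OF step.IH yz] by simp
qed

lemma Char_sub_I: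
  fixes f :: "mono \<Rightarrow>\<^sub>0 'k::comm_ring_1"
  assumes "f \<in> CharS s E psi"
  shows "f \<in> IdG s E psi"
  using assms
proof (induction "card (kys f)" arbitrary: f rule: less_induct)
  case less
  show ?case
  proof (cases "kys f = {}")
    case True then have "f = 0" by simp
    then show ?thesis by (simp add: I_zero)
  next
    case False
    then obtain m where m: "m \<in> kys f" by blast
    define a where "a = lkp f m"
    have a0: "a \<noteq> 0" using m by (simp add: a_def in_keys_iff)
    have fP: "f \<in> polys s" "\<And>C. closedset s E psi C \<Longrightarrow> cs C f = 0"
      using less.prems by (auto simp: CharS_def)
    let ?C = "{v. conn s E psi m v}"
    have cs0: "cs ?C f = 0" by (rule fP(2)[OF closed_class])
    have "\<exists>u \<in> kys f \<inter> ?C. u \<noteq> m"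
    proof (rule ccontr)
      assume "\<not> ?thesis"
      then have "kys f \<inter> ?C = {m}" using m conn_refl by auto
      then have "cs ?C f = a" by (simp add: cs_def a_def)
      with cs0 a0 show False by simp
    qed
    then obtain u where u: "u \<in> kys f" "conn s E psi m u" "u \<noteq> m" by blast
    define h where "h = sgl 0 a * (sgl m 1 - sgl u 1)"
    have hI: "h \<in> IdG s E psi" unfolding h_def by (intro I_mult I_binom polys_single mono_zero u(2))
    have h_eq: "h = sgl m a - sgl u a" by (simp add: h_def mult_single right_diff_distrib)
    define f' where "f' = f - h"
    have lk': "lkp f' v = lkp f v - (if v = m then a else 0) + (if v = u then a else 0)" for v
      unfolding f'_def h_eq using u(3) by (simp add: lookup_minus lookup_single when_def)
    have keys': "kys f' \<subseteq> kys f - {m}"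
    proof
      fix v assume v: "v \<in> kys f'"
      show "v \<in> kys f - {m}"
      proof (cases "v = m")
        case True then show ?thesis using v lk'[of v] u(3) by (simp add: in_keys_iff a_def)
      next
        case False
        show ?thesis
        proof (cases "v = u")
          case True then show ?thesis using u False by simp
        next
          case False2: False
          then show ?thesis using v lk'[of v] False by (simp add: in_keys_iff)
        qed
      qed
    qed
    have card: "card (kys f') < card (kys f)"
    proof -
      have "kys f' \<subset> kys f" using keys' m by blast
      then show ?thesis by (rule psubset_card_mono[OF finite_keys])
    qed
    have "f' \<in> CharS s E psi"
    proof -
      have "f' \<in> polys s" using keys' fP(1) by (auto simp: polys_iff)
      moreover have "cs C f' = 0" if C: "closedset s E psi C" for C
      proof -
        have "m \<in> C \<longleftrightarrow> u \<in> C" using C u(2) unfolding closedset_def by blast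
        then show ?thesis unfolding f'_def h_eq using fP(2)[OF C] by (simp add: cs_diff cs_single)
      qed
      ultimately show ?thesis unfolding CharS_def by blast
    qed
    then have f'I: "f' \<in> IdG s E psi" using less.hyps card by blast
    have "f = f' + h" unfolding f'_def by simp
    then show ?thesis using I_add[OF f'I hI] by simp
  qed
qed

lemma av_lookup: "lkp (all_vars_monomial s) j = (if j < s then 1 else 0)"
  unfolding all_vars_monomial_def by (simp add: lookup_sum lookup_single when_def)

lemma av_mono: "all_vars_monomial s \<in> monomials s"
  by (simp add: mono_iff av_lookup)

lemma monom_pow:
  "\<exists>W. (monom_poly A :: mono \<Rightarrow>\<^sub>0 'k::comm_ring_1) ^ k = sgl W 1 \<and> (\<forall>j. lkp W j = k * lkp A j)"
proof (induction k)
  case 0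
  show ?case by (intro exI[of _ 0]) simp
next
  case (Suc k)
  then obtain W where W: "(monom_poly A :: mono \<Rightarrow>\<^sub>0 'k) ^ k = sgl W 1" "\<forall>j. lkp W j = k * lkp A j"
    by blast
  show ?case
    by (intro exI[of _ "A + W"]) (simp add: W(1)[unfolded monom_poly_def] W(2) monom_poly_def mult_single lookup_add)
qed

lemma cancel_conn:
  assumes nc: "\<not> catalytic s E psi"
    and u: "u \<in> monomials s" and v: "v \<in> monomials s" and W: "W \<in> monomials s"
    and c: "conn s E psi (W + u) (W + v)"
  shows "conn s E psi u v"
proof -
  let ?M = "W + u" and ?N = "W + v"
  have "?M \<in> monomials s" "?N \<in> monomials s" using u v W by (auto intro: mono_add)
  then have c2: "conn s E psi (mono_div ?M (mono_gcd ?M ?N)) (mono_div ?N (mono_gcd ?M ?N))"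
    using nc c unfolding catalytic_def by blast
  let ?g = "mono_gcd u v"
  have e1: "mono_div ?M (mono_gcd ?M ?N) = u - ?g"
    by (rule poly_mapping_eqI) (simp add: mono_div_def lookup_minus lookup_add lookup_gcd)
  have e2: "mono_div ?N (mono_gcd ?M ?N) = v - ?g"
    by (rule poly_mapping_eqI) (simp add: mono_div_def lookup_minus lookup_add lookup_gcd)
  have "conn s E psi (?g + (u - ?g)) (?g + (v - ?g))"
    using conn_shift[OF mono_gcd_mem[OF u] c2[unfolded e1 e2]] .
  moreover have "?g + (u - ?g) = u"
    by (rule poly_mapping_eqI) (simp add: lookup_minus lookup_add lookup_gcd)
  moreover have "?g + (v - ?g) = v"
    by (rule poly_mapping_eqI) (simp add: lookup_minus lookup_add lookup_gcd)
  ultimately show ?thesis by simp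
qed

theorem lemma3p2:
  fixes s n :: nat and E :: "(nat \<times> nat) set" and psi :: "nat \<Rightarrow> (nat \<Rightarrow>\<^sub>0 nat)"
  assumes "is_crn s n E psi"
    and "weakly_reversible n E"
  shows "catalytic s E psi \<longleftrightarrow>
    ideal_gen s (event_system E psi :: ((nat \<Rightarrow>\<^sub>0 nat) \<Rightarrow>\<^sub>0 'k::field_char_0) set)
      \<subset> saturation s (ideal_gen s (event_system E psi)) (monom_poly (all_vars_monomial s))"
proof -
  note crn = assms(1)
  let ?I = "ideal_gen s (event_system E psi) :: (mono \<Rightarrow>\<^sub>0 'k) set"
  let ?f = "monom_poly (all_vars_monomial s) :: mono \<Rightarrow>\<^sub>0 'k"
  let ?S = "saturation s ?I ?f"
  have fpoly: "?f \<in> polys s" unfolding monom_poly_def by (rule polys_single[OF av_mono])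
  have sub: "?I \<subseteq> ?S"
  proof
    fix g assume g: "g \<in> ?I"
    then have "g \<in> polys s" using I_sub_Char[OF crn g] by (simp add: CharS_def)
    moreover have "?f ^ 1 * g \<in> ?I" using I_mult[OF fpoly g] by simp
    ultimately show "g \<in> ?S" unfolding saturation_def by blast
  qed
  have key: "catalytic s E psi \<longleftrightarrow> \<not> ?S \<subseteq> ?I"
  proof
    assume "catalytic s E psi"
    then obtain M N where MN: "M \<in> monomials s" "N \<in> monomials s" "conn s E psi M N"
      and nc: "\<not> conn s E psi (mono_div M (mono_gcd M N)) (mono_div N (mono_gcd M N))"
      unfolding catalytic_def by blast
    define D where "D = mono_gcd M N"
    define M' where "M' = M - D"
    define N' where "N' = N - D"
    have nc': "\<not> conn s E psi M' N'" using nc by (simp add: M'_def N'_def D_def mono_div_def)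
    define k where "k = Suc (Max (lkp M ` {..<s}))"
    obtain W where W: "?f ^ k = sgl W 1" "\<forall>j. lkp W j = k * lkp (all_vars_monomial s) j"
      using monom_pow by blast
    have DW: "lkp D j \<le> lkp W j" for j
    proof (cases "j < s")
      case True
      have "lkp D j \<le> lkp M j" by (simp add: D_def lookup_gcd)
      also have "\<dots> \<le> Max (lkp M ` {..<s})" using True by (intro Max_ge) auto
      also have "\<dots> < k" by (simp add: k_def)
      also have "k = lkp W j" using True W(2) by (simp add: av_lookup)
      finally show ?thesis by simp
    next
      case False
      then have "lkp M j = 0" using MN(1) by (simp add: mono_iff)
      then show ?thesis by (simp add: D_def lookup_gcd)
    qed
    define R where "R = W - D"
    have Wm: "W \<in> monomials s" using W(2) by (simp add: mono_iff av_lookup)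
    have Rm: "R \<in> monomials s" unfolding R_def by (rule mono_minus[OF Wm])
    have M'm: "M' \<in> monomials s" unfolding M'_def by (rule mono_minus[OF MN(1)])
    have N'm: "N' \<in> monomials s" unfolding N'_def by (rule mono_minus[OF MN(2)])
    have e1: "W + M' = R + M"
      by (rule poly_mapping_eqI) (use DW in \<open>simp add: R_def M'_def D_def lookup_minus lookup_add lookup_gcd\<close>)
    have e2: "W + N' = R + N"
      by (rule poly_mapping_eqI) (use DW in \<open>simp add: R_def N'_def D_def lookup_minus lookup_add lookup_gcd\<close>)
    define h where "h = sgl M' 1 - (sgl N' 1 :: mono \<Rightarrow>\<^sub>0 'k)"
    have hp: "h \<in> polys s" unfolding h_def using M'm N'm by (intro polys_diff polys_single)
    have "?f ^ k * h = sgl (R + M) 1 - sgl (R + N) 1"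
      unfolding W(1) h_def by (simp add: right_diff_distrib mult_single e1[symmetric] e2[symmetric])
    moreover have "sgl (R + M) 1 - sgl (R + N) 1 \<in> ?I"
      by (rule I_binom, rule conn_shift[OF Rm MN(3)])
    ultimately have "h \<in> ?S" using hp unfolding saturation_def k_def by (intro CollectI conjI exI[of _ k]) (auto simp: k_def)
    moreover have "h \<notin> ?I"
    proof
      assume "h \<in> ?I"
      then have hc: "h \<in> CharS s E psi" by (rule I_sub_Char[OF crn])
      let ?C = "{v. conn s E psi M' v}"
      have "cs ?C h = 0" using hc closed_class unfolding CharS_def by blast
      moreover have "cs ?C h = 1"
        unfolding h_def using nc' conn_refl[of s E psi M'] by (simp add: cs_diff cs_single)
      ultimately show False by simp
    qed
    ultimately show "\<not> ?S \<subseteq> ?I" by blast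
  next
    assume ns: "\<not> ?S \<subseteq> ?I"
    show "catalytic s E psi"
    proof (rule ccontr)
      assume nc: "\<not> catalytic s E psi"
      have "?S \<subseteq> ?I"
      proof
        fix g assume "g \<in> ?S"
        then obtain k where g: "g \<in> polys s" "k > 0" "?f ^ k * g \<in> ?I"
          unfolding saturation_def by blast
        obtain W where W: "?f ^ k = sgl W 1" "\<forall>j. lkp W j = k * lkp (all_vars_monomial s) j"
          using monom_pow by blast
        have Wm: "W \<in> monomials s" using W(2) by (simp add: mono_iff av_lookup)
        have WC: "sgl W 1 * g \<in> CharS s E psi" using I_sub_Char[OF crn g(3)] W(1) by simp
        have "cs C g = 0" if C: "closedset s E psi C" for C
        proof -
          let ?C' = "{v. \<exists>t\<in>C. conn s E psi (W + t) v}"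
          have cl: "closedset s E psi ?C'"
            unfolding closedset_def
          proof (intro allI impI)
            fix a b assume ab: "conn s E psi a b"
            show "a \<in> ?C' \<longleftrightarrow> b \<in> ?C'"
            proof
              assume "a \<in> ?C'"
              then obtain t where t: "t \<in> C" "conn s E psi (W + t) a" by blast
              have "conn s E psi (W + t) b" by (rule conn_trans[OF t(2) ab])
              then show "b \<in> ?C'" using t(1) by blast
            next
              assume "b \<in> ?C'"
              then obtain t where t: "t \<in> C" "conn s E psi (W + t) b" by blast
              have "conn s E psi (W + t) a" by (rule conn_trans[OF t(2) conn_sym[OF ab]])
              then show "a \<in> ?C'" using t(1) by blast
            qed
          qed
          have "\<forall>C. closedset s E psi C \<longrightarrow> cs C (sgl W 1 * g) = 0" using WC by (simp add: CharS_def)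
          then have "cs ?C' (sgl W 1 * g) = 0" using cl by blast
          then have z: "cs {t. W + t \<in> ?C'} g = 0" by (simp add: cs_shift)
          have "kys g \<inter> {t. W + t \<in> ?C'} = kys g \<inter> C"
          proof (intro equalityI subsetI)
            fix t assume t: "t \<in> kys g \<inter> {t. W + t \<in> ?C'}"
            then obtain t' where t': "t' \<in> C" "conn s E psi (W + t') (W + t)" by blast
            have tm: "t \<in> monomials s" using t g(1) by (auto simp: polys_iff)
            then have "W + t \<in> monomials s" using Wm by (rule mono_add[rotated])
            then have "W + t' \<in> monomials s" using conn_mono[OF crn conn_sym[OF t'(2)]] by blast
            then have "t' \<in> monomials s" by (rule mono_add_left)
            then have "conn s E psi t' t" using cancel_conn[OF nc _ tm Wm t'(2)] by blast
            then show "t \<in> kys g \<inter> C" using t t'(1) C unfolding closedset_def by blast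
          next
            fix t assume "t \<in> kys g \<inter> C"
            then have "t \<in> kys g" "t \<in> C" by auto
            moreover have "\<exists>t'\<in>C. conn s E psi (W + t') (W + t)"
              using \<open>t \<in> C\<close> by (intro bexI[of _ t] conn_refl)
            ultimately show "t \<in> kys g \<inter> {t. W + t \<in> ?C'}" by blast
          qed
          from cs_cong[OF this] z show ?thesis by simp
        qed
        then have "g \<in> CharS s E psi" using g(1) unfolding CharS_def by blast
        then show "g \<in> ?I" by (rule Char_sub_I)
      qed
      with ns show False by blast
    qed
  qed
  show ?thesis using sub key by blast
qed

end
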